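(* Let $\lambda\in\mathcal P_\epsilon(N)$ and suppose Case 2 of the Kempken–Spaltenstein algorithm occurs for $\lambda$ at index $i$. Then $\Delta(\lambda^{(i)})=\Delta(\lambda)\setminus\{(i,i+1)\}$. If moreover $(i,i+1)$ is a good 2-step of $\lambda$, then $s(\lambda^{(i)})=s(\lambda)$.
   Context: $\mathcal P_\epsilon(N)$ ($\epsilon=\pm1$) is the set of partitions $\lambda=(\lambda_1\ge\dots\ge\lambda_n\ge1)$ of $N$ in which every part $m$ with $\epsilon(-1)^m=1$ occurs with even multiplicity; conventions $\lambda_0=0$, $\lambda_i=0$ for $i>n$. $s(\lambda)=\sum_{i=1}^n\lfloor(\lambda_i-\lambda_{i+1})/2\rfloor$. A 2-step of $\lambda$ is a pair $(i,i+1)$, $1\le i<n$, with $\epsilon(-1)^{\lambda_i}=\epsilon(-1)^{\lambda_{i+1}}=-1$, $\lambda_{i-1}\ne\lambda_i$, $\lambda_{i+1}\ne\lambda_{i+2}$; $\Delta(\lambda)$ is the set of 2-steps. A 2-step $(i,i+1)$ is bad if ($i>1$ and $\lambda_{i-1}-\lambda_i$ is even) or $\lambda_{i+1}-\lambda_{i+2}$ is even, and good otherwise. Case 2 occurs at $i$ if $(i,i+1)\in\Delta(\lambda)$ and $\lambda_i=\lambda_{i+1}$; then $\lambda^{(i)}=(\lambda_1-2,\dots,\lambda_{i-1}-2,\lambda_i-1,\lambda_{i+1}-1,\lambda_{i+2},\dots,\lambda_n)$ with zero parts discarded, an element of $\mathcal P_\epsilon(N-2i)$. *)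

theory Defs
  imports Main
begin

(* A partition lambda = (lambda_1 >= ... >= lambda_n >= 1) is represented by the list
   [lambda_1, ..., lambda_n].  Parts are 1-indexed; lambda_0 = 0 and lambda_i = 0 for i > n. *)

definition part :: "nat list \<Rightarrow> nat \<Rightarrow> nat" where
  "part xs i = (if 1 \<le> i \<and> i \<le> length xs then xs ! (i - 1) else 0)"

definition is_partition :: "nat list \<Rightarrow> nat \<Rightarrow> bool" where
  "is_partition xs N \<longleftrightarrow> sorted_wrt (\<ge>) xs \<and> (\<forall>x\<in>set xs. x \<ge> 1) \<and> sum_list xs = N"

definition P_eps :: "int \<Rightarrow> nat \<Rightarrow> nat list set" where
  "P_eps eps N = {xs. is_partition xs N \<and>
     (\<forall>m\<in>set xs. eps * (-1) ^ m = 1 \<longrightarrow> even (count_list xs m))}"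

definition s_inv :: "nat list \<Rightarrow> nat" where
  "s_inv xs = (\<Sum>i=1..length xs. (part xs i - part xs (i+1)) div 2)"

definition is_two_step :: "int \<Rightarrow> nat list \<Rightarrow> nat \<Rightarrow> bool" where
  "is_two_step eps xs i \<longleftrightarrow> 1 \<le> i \<and> i < length xs \<and>
     eps * (-1) ^ part xs i = -1 \<and> eps * (-1) ^ part xs (i+1) = -1 \<and>
     part xs (i-1) \<noteq> part xs i \<and> part xs (i+1) \<noteq> part xs (i+2)"

definition Delta :: "int \<Rightarrow> nat list \<Rightarrow> (nat \<times> nat) set" where
  "Delta eps xs = {(i, i+1) | i. is_two_step eps xs i}"

definition bad_two_step :: "int \<Rightarrow> nat list \<Rightarrow> nat \<Rightarrow> bool" where
  "bad_two_step eps xs i \<longleftrightarrow> (i, i+1) \<in> Delta eps xs \<and>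
     ((i > 1 \<and> even (part xs (i-1) - part xs i)) \<or> even (part xs (i+1) - part xs (i+2)))"

definition good_two_step :: "int \<Rightarrow> nat list \<Rightarrow> nat \<Rightarrow> bool" where
  "good_two_step eps xs i \<longleftrightarrow> (i, i+1) \<in> Delta eps xs \<and> \<not> bad_two_step eps xs i"

definition case2 :: "int \<Rightarrow> nat list \<Rightarrow> nat \<Rightarrow> bool" where
  "case2 eps xs i \<longleftrightarrow> (i, i+1) \<in> Delta eps xs \<and> part xs i = part xs (i+1)"

definition lam_case2 :: "nat list \<Rightarrow> nat \<Rightarrow> nat list" where
  "lam_case2 xs i = filter (\<lambda>x. x \<noteq> 0)
     (map (\<lambda>x. x - 2) (take (i - 1) xs) @ [part xs i - 1, part xs (i+1) - 1] @ drop (i + 1) xs)"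

end

theory Submission imports Defs begin

lemma part_Cons: "part (y#zs) j = (if j = 0 then 0 else if j = 1 then y else part zs (j-1))"
  by (cases j) (auto simp: part_def nth_Cons split: nat.splits)

lemma part_zeros: "\<forall>x\<in>set ys. x = 0 \<Longrightarrow> part ys j = 0"
  by (auto simp: part_def)

lemma part_filter:
  "sorted_wrt (\<ge>) (ys::nat list) \<Longrightarrow> part (filter (\<lambda>x. x \<noteq> 0) ys) j = part ys j"
proof (induction ys arbitrary: j)
  case Nil then show ?case by simp
next
  case (Cons y ys)
  show ?case
  proof (cases "y = 0")
    case True
    with Cons.prems have "\<forall>x\<in>set (y#ys). x = 0" by auto
    then have "filter (\<lambda>x. x \<noteq> 0) (y#ys) = []" by (auto simp: filter_empty_conv)
    then show ?thesis using part_zeros[OF \<open>\<forall>x\<in>set (y#ys). x = 0\<close>] by (simp add: part_def)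
  next
    case False
    then show ?thesis using Cons by (simp add: part_Cons)
  qed
qed

lemma part_nz: "\<forall>x\<in>set xs. x \<noteq> 0 \<Longrightarrow> (j < length xs \<longleftrightarrow> part xs (j+1) \<noteq> 0)"
  by (auto simp: part_def)

lemma two_step_alt: "\<forall>x\<in>set xs. x \<noteq> 0 \<Longrightarrow> is_two_step eps xs j \<longleftrightarrow> 1 \<le> j \<and> part xs (j+1) \<noteq> 0 \<and>
     eps * (-1) ^ part xs j = -1 \<and> eps * (-1) ^ part xs (j+1) = -1 \<and>
     part xs (j-1) \<noteq> part xs j \<and> part xs (j+1) \<noteq> part xs (j+2)"
  using part_nz[of xs j] by (auto simp: is_two_step_def)

lemma part_mono: "sorted_wrt (\<ge>) xs \<Longrightarrow> 1 \<le> j \<Longrightarrow> j \<le> k \<Longrightarrow> part xs k \<le> part xs j"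
proof -
  assume s: "sorted_wrt (\<ge>) xs" and j: "1 \<le> j" "j \<le> k"
  show ?thesis
  proof (cases "k \<le> length xs")
    case True
    have "xs ! (k-1) \<le> xs ! (j-1)"
    proof (cases "j = k")
      case False
      then show ?thesis using s j True by (auto simp: sorted_wrt_iff_nth_less)
    qed simp
    then show ?thesis using j True by (simp add: part_def)
  qed (simp add: part_def)
qed

lemma T_iff: "eps = 1 \<or> eps = -1 \<Longrightarrow> (eps * (-1::int) ^ x = -1) \<longleftrightarrow> (eps = 1 \<longleftrightarrow> odd x)"
  by (auto simp: minus_one_power_iff)

lemma odd_sub2: "2 \<le> (x::nat) \<Longrightarrow> odd (x - 2) = odd x"
  by (simp add: even_diff_nat)

lemma odd_sub1: "1 \<le> (x::nat) \<Longrightarrow> odd (x - 1) = even x"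
  by (simp add: even_diff_nat)

lemma odd_div_pred: "odd (d::nat) \<Longrightarrow> (d - 1) div 2 = d div 2"
  by (elim oddE) simp

lemma part_lam:
  fixes xs :: "nat list"
  assumes s: "sorted_wrt (\<ge>) xs" and i: "1 \<le> i" "i < length xs"
    and eq: "part xs i = part xs (i+1)" and ne1: "part xs (i-1) \<noteq> part xs i"
    and ne2: "part xs (i+1) \<noteq> part xs (i+2)"
  shows "part (lam_case2 xs i) j = part xs j - (if j < i then 2 else if j \<le> i+1 then 1 else 0)"
proof -
  define a where "a = part xs i"
  have ai: "xs ! (i-1) = a" "xs ! i = a" using i eq by (auto simp: a_def part_def)
  define M where "M = map (\<lambda>x. x - 2) (take (i - 1) xs) @ [part xs i - 1, part xs (i+1) - 1] @ drop (i + 1) xs"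
  have Mi: "M = map (\<lambda>x. x - 2) (take (i - 1) xs) @ [a - 1, a - 1] @ drop (i + 1) xs"
    using eq by (simp add: M_def a_def)
  have big: "x \<ge> a + 1" if "x \<in> set (take (i-1) xs)" for x
  proof -
    from that obtain k where k: "k < i - 1" "x = xs ! k" using i
      by (auto simp: in_set_conv_nth)
    have "xs ! (i-2) \<le> xs ! k" using s k i
      by (cases "k = i-2") (auto simp: sorted_wrt_iff_nth_less)
    moreover have "xs ! (i-2) \<ge> a" using s k i ai
      by (auto simp: sorted_wrt_iff_nth_less)
    moreover have "xs ! (i-2) \<noteq> a"
    proof -
      obtain m where m: "i = m + 2" using k by (intro that[of "i-2"]) arith
      have p: "part xs (i-1) = xs ! (i-2)" using i unfolding m by (simp add: part_def)
      then show ?thesis using ne1 a_def by simp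
    qed
    ultimately show ?thesis using k by auto
  qed
  have small: "x + 1 \<le> a" if "x \<in> set (drop (i+1) xs)" for x
  proof -
    from that obtain k where k: "k < length xs - (i+1)" "x = xs ! (i+1+k)"
      by (auto simp: in_set_conv_nth)
    have "xs ! (i+1+k) \<le> xs ! (i+1)" using s k i
      by (cases "k = 0") (auto simp: sorted_wrt_iff_nth_less)
    moreover have "xs ! (i+1) \<le> a" using s k i ai
      by (auto simp: sorted_wrt_iff_nth_less)
    moreover have "i + 2 \<le> length xs" using k by arith
    moreover have "xs ! (i+1) \<noteq> a" using ne2 k i ai calculation(3) by (auto simp: part_def a_def)
    ultimately show ?thesis using k by auto
  qed
  have sM: "sorted_wrt (\<ge>) M"
    unfolding Mi sorted_wrt_append sorted_wrt_map
  proof (intro conjI)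
    show "sorted_wrt (\<lambda>x y. y - 2 \<le> x - 2) (take (i - 1) xs)"
      using sorted_wrt_take[OF s] by (rule sorted_wrt_mono_rel[rotated]) auto
    show "sorted_wrt (\<ge>) (drop (i + 1) xs)" using sorted_wrt_drop[OF s] .
  qed (use big small in \<open>fastforce+\<close>)
  have lM: "length M = length xs" using i by (simp add: M_def)
  have "part M j = part xs j - (if j < i then 2 else if j \<le> i+1 then 1 else 0)"
  proof -
    consider "j = 0" | "1 \<le> j" "j < i" | "j = i" | "j = i + 1" | "i + 1 < j" "j \<le> length xs" | "length xs < j"
      by linarith
    then show ?thesis
    proof cases
      case 2 then show ?thesis using i by (simp add: part_def Mi nth_append)
    next
      case 3 then show ?thesis using i ai by (simp add: part_def Mi nth_append a_def)
    next
      case 4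
      have e: "i - (i-1) = 1" using i by arith
      have "M ! i = ([a - 1, a - 1] @ drop (i + 1) xs) ! (i - (i-1))" using i by (auto simp: Mi nth_append)
      then have "M ! i = a - 1" unfolding e by simp
      then show ?thesis using 4 i ai lM by (simp add: part_def a_def)
    next
      case 5
      then obtain t where t: "j = i + 2 + t" by (intro that[of "j - i - 2"]) arith
      have e: "j - 1 - (i-1) = Suc (Suc t)" using i t by arith
      have "M ! (j-1) = ([a - 1, a - 1] @ drop (i + 1) xs) ! (j - 1 - (i-1))" using i t by (auto simp: Mi nth_append)
      also have "\<dots> = xs ! (j - 1)" unfolding e using 5 t by simp
      finally show ?thesis using 5 i lM by (simp add: part_def)
    qed (use lM in \<open>auto simp: part_def\<close>)
  qed
  then show ?thesis unfolding lam_case2_def M_def[symmetric] using part_filter[OF sM] by simp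
qed

theorem mainTheorem8:
  fixes eps :: int and N i :: nat and xs :: "nat list"
  assumes "eps = 1 \<or> eps = -1"
    and "xs \<in> P_eps eps N"
    and "case2 eps xs i"
  shows "Delta eps (lam_case2 xs i) = Delta eps xs - {(i, i+1)}
         \<and> (good_two_step eps xs i \<longrightarrow> s_inv (lam_case2 xs i) = s_inv xs)"
proof -
  note E = assms(1)
  have s: "sorted_wrt (\<ge>) xs" and nz: "\<forall>x\<in>set xs. x \<noteq> 0"
    using assms(2) by (auto simp: P_eps_def is_partition_def)
  have ts: "is_two_step eps xs i" and eq: "part xs i = part xs (i+1)"
    using assms(3) by (auto simp: case2_def Delta_def)
  define L where "L = lam_case2 xs i"
  have nzL: "\<forall>x\<in>set L. x \<noteq> 0" unfolding L_def lam_case2_def by (simp only: set_filter) blast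
  define P where "P = part xs"
  define Q where "Q = part L"
  define a where "a = P i"
  have i: "1 \<le> i" "i < length xs" using ts by (auto simp: is_two_step_def)
  have ne1: "P (i-1) \<noteq> a" and ne2: "P (i+1) \<noteq> P (i+2)" and Ta: "eps = 1 \<longleftrightarrow> odd a"
    using ts E by (auto simp: is_two_step_def a_def P_def T_iff)
  have a1: "P (i+1) = a" using eq by (simp add: P_def a_def)
  have Q: "\<And>j. Q j = P j - (if j < i then 2 else if j \<le> i+1 then 1 else 0)"
    unfolding Q_def P_def L_def using part_lam[OF s i eq] ne1 ne2 eq
    by (simp add: P_def a_def)
  have P0: "P 0 = 0" by (simp add: P_def part_def)
  have mono: "\<And>j k. 1 \<le> j \<Longrightarrow> j \<le> k \<Longrightarrow> P k \<le> P j"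
    unfolding P_def using part_mono[OF s] by blast
  have apos: "a \<ge> 1"
  proof -
    have "xs ! (i-1) \<in> set xs" using i by simp
    then have "xs ! (i-1) \<noteq> 0" using nz by blast
    then show ?thesis using i by (simp add: a_def P_def part_def)
  qed
  have big: "\<And>j. 1 \<le> j \<Longrightarrow> j < i \<Longrightarrow> P j \<ge> a + 1"
  proof -
    fix j assume j: "1 \<le> j" "j < i"
    have "P (i-1) \<le> P j" "a \<le> P (i-1)" using mono[of j "i-1"] mono[of "i-1" i] j
      by (auto simp: a_def)
    then show "P j \<ge> a + 1" using ne1 by linarith
  qed
  have small: "\<And>j. i + 2 \<le> j \<Longrightarrow> P j < a"
  proof -
    fix j assume j: "i + 2 \<le> j"
    have "P j \<le> P (i+2)" "P (i+2) \<le> a" using mono[of "i+2" j] mono[of "i+1" "i+2"] j a1 i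
      by auto
    then show "P j < a" using ne2 a1 by linarith
  qed
  have TS: "\<And>ys j. \<forall>x\<in>set ys. x \<noteq> 0 \<Longrightarrow> is_two_step eps ys j \<longleftrightarrow> 1 \<le> j \<and> part ys (j+1) \<noteq> 0 \<and>
     (eps = 1 \<longleftrightarrow> odd (part ys j)) \<and> (eps = 1 \<longleftrightarrow> odd (part ys (j+1))) \<and>
     part ys (j-1) \<noteq> part ys j \<and> part ys (j+1) \<noteq> part ys (j+2)"
    using two_step_alt T_iff[OF E] by simp
  have pm: "\<And>j. j - 1 = 0 \<or> P (j-1) \<ge> P j"
  proof -
    fix j :: nat
    show "j - 1 = 0 \<or> P (j-1) \<ge> P j"
    proof (cases "1 \<le> j - 1")
      case True then show ?thesis using mono[of "j-1" j] by simp
    qed simp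
  qed
  have p1: "\<And>x. (eps = 1 \<longleftrightarrow> odd x) \<Longrightarrow> x \<noteq> a + 1 \<and> (x \<ge> a + 1 \<longrightarrow> x \<noteq> 2)"
    using Ta apos by auto
  have p2: "\<And>x. (eps = 1 \<longleftrightarrow> odd x) \<Longrightarrow> x \<noteq> a - 1"
    using Ta apos by (auto simp: odd_sub1)
  have key: "is_two_step eps L j \<longleftrightarrow> is_two_step eps xs j \<and> j \<noteq> i" for j
  proof -
    have l: "is_two_step eps L j \<longleftrightarrow> 1 \<le> j \<and> Q (j+1) \<noteq> 0 \<and>
     (eps = 1 \<longleftrightarrow> odd (Q j)) \<and> (eps = 1 \<longleftrightarrow> odd (Q (j+1))) \<and>
     Q (j-1) \<noteq> Q j \<and> Q (j+1) \<noteq> Q (j+2)" using TS[OF nzL] by (simp add: Q_def)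
    have r: "is_two_step eps xs j \<longleftrightarrow> 1 \<le> j \<and> P (j+1) \<noteq> 0 \<and>
     (eps = 1 \<longleftrightarrow> odd (P j)) \<and> (eps = 1 \<longleftrightarrow> odd (P (j+1))) \<and>
     P (j-1) \<noteq> P j \<and> P (j+1) \<noteq> P (j+2)" using TS[OF nz] by (simp add: P_def)
    consider "j = 0" | "1 \<le> j" "j + 1 < i" | "j + 1 = i" "1 \<le> j" | "j = i" | "j = i + 1" | "i + 2 \<le> j"
      by linarith
    then show ?thesis
    proof cases
      case 1 then show ?thesis using l r by simp
    next
      case 2
      have f: "P j \<ge> a + 1" "P (j+1) \<ge> a + 1" "j - 1 = 0 \<or> P (j-1) \<ge> P j"
        using big[of j] big[of "j+1"] pm[of j] 2 by auto
      have g: "j + 2 < i \<and> P (j+2) \<ge> a + 1 \<or> j + 2 = i \<and> P (j+2) = a"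
        proof (cases "j+2 < i")
        case False then have "j + 2 = i" using 2 by simp
        then show ?thesis using a_def by simp
      qed (use big[of "j+2"] 2 in auto)
      have q: "Q j = P j - 2" "Q (j+1) = P (j+1) - 2" "Q (j-1) = P (j-1) - 2"
        using 2 unfolding Q by auto
      have q2: "j + 2 < i \<and> Q (j+2) = P (j+2) - 2 \<and> P (j+2) \<ge> a + 1 \<or> j + 2 = i \<and> Q (j+2) = a - 1 \<and> P (j+2) = a"
        using g unfolding Q by auto
      have o: "odd (P j - 2) = odd (P j)" "odd (P (j+1) - 2) = odd (P (j+1))"
        using f apos by (auto simp: odd_sub2)
      have pa: "(eps = 1 \<longleftrightarrow> odd (P j)) \<Longrightarrow> P j \<noteq> 2" "(eps = 1 \<longleftrightarrow> odd (P (j+1))) \<Longrightarrow> P (j+1) \<noteq> 2 \<and> P (j+1) \<noteq> a + 1"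
        using p1[of "P j"] p1[of "P (j+1)"] f by auto
      have m: "P (j+1) \<le> P j" using mono[of j "j+1"] 2 by simp
      show ?thesis unfolding l r q o
      proof (intro iffI conjI; (elim conjE)?)
      qed (use 2 f q2 P0 pa m in auto)
    next
      case 3
      have f: "P j \<ge> a + 1" "j - 1 = 0 \<or> P (j-1) \<ge> P j" "P (j+1) = a" "P (j+2) = a"
        using big[of j] pm[of j] 3 a1 a_def by auto
      show ?thesis unfolding l r Q using 3 f P0 Ta apos p1[of "P j"] by (auto simp: odd_sub2 odd_sub1)
    next
      case 4
      show ?thesis unfolding l r Q using 4 a1 a_def Ta apos by auto
    next
      case 5
      show ?thesis unfolding l r Q using 5 a1 a_def Ta apos by auto
    next
      case 6
      have f: "P j < a" "P (j+1) \<le> P j" "P (j+2) \<le> P (j+1)" "j - 1 = i + 1 \<or> (j - 1 \<ge> i + 2)"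
        using small[of j] mono[of j "j+1"] mono[of "j+1" "j+2"] 6 i by auto
      have g: "j - 1 = i + 1 \<Longrightarrow> P (j-1) = a" using a1 by auto
      show ?thesis unfolding l r Q using 6 f g Ta apos p2[of "P j"] by (auto simp: odd_sub2 odd_sub1)
    qed
  qed
  have D: "Delta eps L = Delta eps xs - {(i, i+1)}"
    unfolding Delta_def using key by auto
  have S: "s_inv L = s_inv xs" if good: "good_two_step eps xs i"
  proof -
    have g1: "i > 1 \<Longrightarrow> odd (P (i-1) - a)" and g2: "odd (a - P (i+2))"
      using good a1 by (auto simp: good_two_step_def bad_two_step_def P_def a_def)
    have pw: "(Q j - Q (j+1)) div 2 = (P j - P (j+1)) div 2" if j: "1 \<le> j" for j
    proof -
      consider "j + 1 < i" | "j + 1 = i" | "j = i" | "j = i + 1" | "i + 2 \<le> j"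
        by linarith
      then show ?thesis
      proof cases
        case 1
        have "P j - 2 - (P (j+1) - 2) = P j - P (j+1)" using big[of j] big[of "j+1"] j 1 apos by linarith
        then show ?thesis unfolding Q using 1 by simp
      next
        case 2
        have "odd (P j - a)" "P j \<ge> a + 1" using g1 2 j big[of j] by auto
        have qj: "Q j = P j - 2" "Q (j+1) = a - 1" using 2 a_def unfolding Q by auto
        have "P j - 2 - (a - 1) = P j - a - 1" using apos by linarith
        moreover have "(P j - a - 1) div 2 = (P j - a) div 2" using \<open>odd (P j - a)\<close> by (rule odd_div_pred)
        ultimately show ?thesis using qj 2 a_def by simp
      next
        case 3 then show ?thesis unfolding Q using a1 a_def by simp
      next
        case 4
        have "P (j+1) < a" using small 4 by simp
        have qj: "Q j = a - 1" "Q (j+1) = P (j+1)" using 4 a1 unfolding Q by auto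
        have "a - 1 - P (j+1) = a - P (j+1) - 1" by linarith
        moreover have "(a - P (j+1) - 1) div 2 = (a - P (j+1)) div 2" using g2 4 by (intro odd_div_pred) simp
        ultimately show ?thesis using qj 4 a1 by simp
      qed (unfold Q, simp)
    qed
    have lL: "length L \<le> length xs"
    proof (rule ccontr)
      assume "\<not> ?thesis"
      then have "Q (length xs + 1) \<noteq> 0" using part_nz[OF nzL, of "length xs"] by (simp add: Q_def)
      moreover have "P (length xs + 1) = 0" by (simp add: P_def part_def)
      ultimately show False unfolding Q by simp
    qed
    have z: "(Q j - Q (j+1)) div 2 = 0" if "length L < j" for j
    proof -
      have "Q j = 0" using that by (simp add: Q_def part_def)
      then show ?thesis by simp
    qed
    have "s_inv xs = (\<Sum>j=1..length xs. (Q j - Q (j+1)) div 2)"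
      unfolding s_inv_def P_def[symmetric] using pw by (intro sum.cong) auto
    also have "\<dots> = (\<Sum>j=1..length L. (Q j - Q (j+1)) div 2) + (\<Sum>j=length L + 1..length xs. (Q j - Q (j+1)) div 2)"
    proof -
      have "{1..length xs} = {1..length L} \<union> {length L+1..length xs}" using lL by auto
      moreover have "{1..length L} \<inter> {length L+1..length xs} = {}" by auto
      ultimately show ?thesis using sum.union_disjoint[of "{1..length L}" "{length L+1..length xs}" "\<lambda>j. (Q j - Q (j + 1)) div 2"] by simp
    qed
    also have "(\<Sum>j=length L + 1..length xs. (Q j - Q (j+1)) div 2) = 0"
      using z by (intro sum.neutral) auto
    finally show ?thesis unfolding s_inv_def Q_def by simp
  qed
  show ?thesis using D S by (simp add: L_def)
qed

end
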